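(* Let $K$ be a pathwise connected poset. (i) $(\Lambda,\lambda)_K$ is a net bundle of discrete groups and $(\Lambda^l,\lambda)_K$ is a net of discrete groups, and the inclusions $i_o:\Lambda^l_o\to\Lambda_o$ define a monomorphism $i:(\Lambda^l,\lambda)_K\to(\Lambda,\lambda)_K$. (ii) If $K$ has a symmetry group $G$, then, with the actions $g_*$, both nets are $G$-covariant and $i$ is a monomorphism of $G$-covariant nets.
   Context: Simplices and paths. For a poset $K$: $0$-simplices are elements of $K$; an $n$-simplex $x$ ($n\ge1$) consists of $(n-1)$-simplices $\partial_0x,\dots,\partial_nx$ and a support $|x|\in K$ with $|\partial_ix|\le|x|$. The opposite $\overline b$ of a $1$-simplex $b$ has the same support and swapped faces. $\iota_a$ is the degenerate $1$-simplex at $a$ (faces and support $a$). For $a\le o$, $(oa)$ is the $1$-simplex with $\partial_1=a$, $\partial_0=o$, support $o$. A path $p=b_n*\cdots*b_1$ is a concatenation of $1$-simplices with $\partial_0b_i=\partial_1b_{i+1}$; its support $|p|$ is the set of supports of the $b_i$; the opposite path is $\overline p=\overline{b_1}*\cdots*\overline{b_n}$. $K$ is pathwise connected if any two elements are joined by a path. $w$-equivalence: two paths with the same endpoints are $w$-equivalent if one is obtained from the other by finitely many of the following moves or their inverses: (1) inserting a degenerate $1$-simplex $\iota_a$; (2) replacing $(oa)*(ae)$ by $(oe)$ for $e\le a\le o$; (3) replacing $\overline b*b$ by $\iota_{\partial_1b}$. Write $[p]_w$ for the class. Groups of loops: $\Lambda_o$ is the set of $w$-classes of loops over $o$ with product $[p]_w[q]_w=[p*q]_w$;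 $\Lambda^l_o\subseteq\Lambda_o$ consists of classes containing some path whose support is contained in $o$ (i.e. all supports $\le o$). For $o\le a$, $\lambda_{ao}([p]_w):=[(ao)*p*\overline{(ao)}]_w$. Nets of groups: a net of discrete groups $(\mathcal G,\jmath)_K$ assigns groups $\mathcal G_o$ and injective homomorphisms $\jmath_{ao}:\mathcal G_o\to\mathcal G_a$ ($o\le a$) with $\jmath_{eo}=\jmath_{ea}\circ\jmath_{ao}$; a net bundle if all $\jmath_{ao}$ are isomorphisms; a monomorphism (over $\mathrm{id}_K$) is a family of injective homomorphisms commuting with the inclusions. Symmetry: a symmetry group $G$ of $K$ is a group acting on $K$ by order automorphisms (injectively into $\mathrm{Aut}(K)$); it acts on simplices by $gx$ with faces $g\partial_ix$ and support $g|x|$, and on paths simplexwise; $g_*([p]_w):=[gp]_w$. A net is $G$-covariant if there are isomorphisms $\alpha^g_o:\mathcal G_o\to\mathcal G_{go}$ with $\alpha^h_{go}\circ\alpha^g_o=\alpha^{hg}_o$ and $\alpha^g_o\circ\jmath_{oa}=\jmath_{go\,ga}\circ\alpha^g_a$; a morphism $\phi$ of $G$-covariant nets satisfies $\beta^g_o\circ\phi_o=\phi_{go}\circ\alpha^g_o$. *)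

theory Defs
  imports "HOL-Algebra.Group_Action"
begin

text \<open>A 1-simplex of a poset is encoded as a triple (d0, d1, support).
  A path b_n * ... * b_1 is encoded as the nonempty list [b_n, ..., b_1]
  (written order), so that the concatenation p * q is p @ q.\<close>

type_synonym 'k simp1 = "'k \<times> 'k \<times> 'k"

definition d0 :: "'k simp1 \<Rightarrow> 'k" where "d0 b = fst b"
definition d1 :: "'k simp1 \<Rightarrow> 'k" where "d1 b = fst (snd b)"
definition supp :: "'k simp1 \<Rightarrow> 'k" where "supp b = snd (snd b)"

definition is_simp1 :: "'k::order simp1 \<Rightarrow> bool" where
  "is_simp1 b \<longleftrightarrow> d0 b \<le> supp b \<and> d1 b \<le> supp b"

definition opp :: "'k simp1 \<Rightarrow> 'k simp1" where
  "opp b = (d1 b, d0 b, supp b)"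

definition iota :: "'k \<Rightarrow> 'k simp1" where
  "iota a = (a, a, a)"

text \<open>edge o a is the 1-simplex (oa): d1 = a, d0 = o, support o (for a \<le> o).\<close>
definition edge :: "'k \<Rightarrow> 'k \<Rightarrow> 'k simp1" where
  "edge o' a = (o', a, o')"

definition is_path :: "'k::order simp1 list \<Rightarrow> bool" where
  "is_path p \<longleftrightarrow> p \<noteq> [] \<and> (\<forall>b\<in>set p. is_simp1 b) \<and>
     (\<forall>i. Suc i < length p \<longrightarrow> d1 (p ! i) = d0 (p ! Suc i))"

definition pstart :: "'k simp1 list \<Rightarrow> 'k" where "pstart p = d1 (last p)"
definition pend :: "'k simp1 list \<Rightarrow> 'k" where "pend p = d0 (hd p)"

definition opp_path :: "'k simp1 list \<Rightarrow> 'k simp1 list" where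
  "opp_path p = rev (map opp p)"

definition path_connected_poset :: "'k::order itself \<Rightarrow> bool" where
  "path_connected_poset _ \<longleftrightarrow>
     (\<forall>a b :: 'k. \<exists>p. is_path p \<and> pstart p = a \<and> pend p = b)"

definition wstep :: "'k::order simp1 list \<Rightarrow> 'k simp1 list \<Rightarrow> bool" where
  "wstep p q \<longleftrightarrow> is_path p \<and> is_path q \<and> pstart p = pstart q \<and> pend p = pend q \<and>
    ((\<exists>xs ys a. p = xs @ ys \<and> q = xs @ [iota a] @ ys) \<or>
     (\<exists>xs ys o' a e. e \<le> a \<and> a \<le> o' \<and>
         p = xs @ [edge o' a, edge a e] @ ys \<and> q = xs @ [edge o' e] @ ys) \<or>
     (\<exists>xs ys b. p = xs @ [opp b, b] @ ys \<and> q = xs @ [iota (d1 b)] @ ys))"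

definition weq :: "'k::order simp1 list \<Rightarrow> 'k simp1 list \<Rightarrow> bool" where
  "weq = (symclp wstep)\<^sup>*\<^sup>*"

definition wclass :: "'k::order simp1 list \<Rightarrow> 'k simp1 list set" where
  "wclass p = {q. weq p q}"

definition loops :: "'k::order \<Rightarrow> 'k simp1 list set" where
  "loops o' = {p. is_path p \<and> pstart p = o' \<and> pend p = o'}"

definition Lambda :: "'k::order \<Rightarrow> 'k simp1 list set monoid" where
  "Lambda o' = \<lparr> carrier = wclass ` loops o',
                mult = (\<lambda>A B. {r. \<exists>p\<in>A. \<exists>q\<in>B. weq (p @ q) r}),
                one = wclass [iota o'] \<rparr>"

definition LambdaL :: "'k::order \<Rightarrow> 'k simp1 list set monoid" where
  "LambdaL o' = (Lambda o')\<lparr> carrier :=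
      {A \<in> carrier (Lambda o'). \<exists>p\<in>A. \<forall>b\<in>set p. supp b \<le> o'} \<rparr>"

definition lam :: "'k::order \<Rightarrow> 'k \<Rightarrow> 'k simp1 list set \<Rightarrow> 'k simp1 list set" where
  "lam a o' A = {r. \<exists>p\<in>A. weq ([edge a o'] @ p @ [opp (edge a o')]) r}"

definition symmetry_group :: "('g, 'b) monoid_scheme \<Rightarrow> ('g \<Rightarrow> 'k::order \<Rightarrow> 'k) \<Rightarrow> bool" where
  "symmetry_group G \<phi> \<longleftrightarrow> group G \<and> group_action G UNIV \<phi> \<and>
     (\<forall>g\<in>carrier G. \<forall>x y. x \<le> y \<longleftrightarrow> \<phi> g x \<le> \<phi> g y) \<and> inj_on \<phi> (carrier G)"

definition simp_act :: "('k \<Rightarrow> 'k) \<Rightarrow> 'k simp1 \<Rightarrow> 'k simp1" where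
  "simp_act f b = (f (d0 b), f (d1 b), f (supp b))"

definition gstar :: "('k::order \<Rightarrow> 'k) \<Rightarrow> 'k simp1 list set \<Rightarrow> 'k simp1 list set" where
  "gstar f A = {r. \<exists>p\<in>A. weq (map (simp_act f) p) r}"

end

theory Submission
  imports Defs
begin


lemma is_path_single[simp]: "is_path [x] \<longleftrightarrow> is_simp1 x"
  by (simp add: is_path_def)

lemma is_path_Cons: "xs \<noteq> [] \<Longrightarrow> is_path (x # xs) \<longleftrightarrow> is_simp1 x \<and> d1 x = d0 (hd xs) \<and> is_path xs"
proof -
  assume ne: "xs \<noteq> []"
  have eq: "(\<forall>i. Suc i < length (x # xs) \<longrightarrow> d1 ((x # xs) ! i) = d0 ((x # xs) ! Suc i)) \<longleftrightarrow>
        d1 x = d0 (hd xs) \<and> (\<forall>i. Suc i < length xs \<longrightarrow> d1 (xs ! i) = d0 (xs ! Suc i))"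
    (is "?L \<longleftrightarrow> ?R")
  proof
    assume L: ?L
    have "d1 x = d0 (hd xs)" using L[rule_format, of 0] ne by (simp add: hd_conv_nth)
    moreover have "\<forall>i. Suc i < length xs \<longrightarrow> d1 (xs ! i) = d0 (xs ! Suc i)"
      using L by (metis Suc_less_eq length_Cons nth_Cons_Suc)
    ultimately show ?R by blast
  next
    assume R: ?R
    show ?L
    proof (intro allI impI)
      fix i assume "Suc i < length (x # xs)"
      then show "d1 ((x # xs) ! i) = d0 ((x # xs) ! Suc i)"
        using R ne by (cases i) (auto simp: hd_conv_nth)
    qed
  qed
  show ?thesis unfolding is_path_def using eq ne by auto
qed

lemma pstart_Cons[simp]: "xs \<noteq> [] \<Longrightarrow> pstart (x # xs) = pstart xs"
  by (simp add: pstart_def)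
lemma pend_Cons[simp]: "pend (x # xs) = d0 x"
  by (simp add: pend_def)
lemma pstart_append[simp]: "ys \<noteq> [] \<Longrightarrow> pstart (xs @ ys) = pstart ys"
  by (simp add: pstart_def)
lemma pend_append[simp]: "xs \<noteq> [] \<Longrightarrow> pend (xs @ ys) = pend xs"
  by (simp add: pend_def)
lemma path_ne: "is_path p \<Longrightarrow> p \<noteq> []" by (simp add: is_path_def)

lemma is_path_append:
  "xs \<noteq> [] \<Longrightarrow> ys \<noteq> [] \<Longrightarrow> is_path (xs @ ys) \<longleftrightarrow> is_path xs \<and> is_path ys \<and> pstart xs = pend ys"
proof (induction xs)
  case Nil then show ?case by simp
next
  case (Cons x xs)
  show ?case
  proof (cases "xs = []")
    case True
    then show ?thesis using Cons.prems by (auto simp add: is_path_Cons pstart_def pend_def)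
  next
    case False
    then show ?thesis using Cons by (simp add: is_path_Cons)
  qed
qed

lemma path_app: "is_path xs \<Longrightarrow> is_path ys \<Longrightarrow> pstart xs = pend ys \<Longrightarrow> is_path (xs @ ys)"
  using is_path_append path_ne by blast
lemma pstart_app_path[simp]: "is_path ys \<Longrightarrow> pstart (xs @ ys) = pstart ys"
  by (metis path_ne pstart_append)
lemma pend_app_path[simp]: "is_path xs \<Longrightarrow> pend (xs @ ys) = pend xs"
  by (metis path_ne pend_append)

lemma wstep_props: "wstep p q \<Longrightarrow> is_path p \<and> is_path q \<and> pstart p = pstart q \<and> pend p = pend q"
  by (simp add: wstep_def)

lemma weq_refl[simp]: "weq p p" by (simp add: weq_def)
lemma weq_sym: "weq p q \<Longrightarrow> weq q p" unfolding weq_def by (rule rtranclp_symclp_sym)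
lemma weq_trans: "weq p q \<Longrightarrow> weq q r \<Longrightarrow> weq p r" unfolding weq_def by (rule rtranclp_trans)
lemma wstep_weq: "wstep p q \<Longrightarrow> weq p q" unfolding weq_def by (simp add: r_into_rtranclp)
lemma wstep_weq2: "wstep q p \<Longrightarrow> weq p q" unfolding weq_def by (simp add: r_into_rtranclp)

lemma weq_path: "weq p q \<Longrightarrow> is_path p \<Longrightarrow> is_path q \<and> pstart q = pstart p \<and> pend q = pend p"
  unfolding weq_def
proof (induction rule: rtranclp_induct)
  case base then show ?case by simp
next
  case (step y z)
  then show ?case by (auto simp: symclp_def dest!: wstep_props)
qed

lemma path_ctx:
  assumes "is_path p" "is_path q" "pstart p = pstart q" "pend p = pend q" "is_path (l @ p @ r)"
  shows "is_path (l @ q @ r) \<and> pstart (l @ q @ r) = pstart (l @ p @ r) \<and> pend (l @ q @ r) = pend (l @ p @ r)"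
proof -
  have pne: "p \<noteq> []" "q \<noteq> []" using assms path_ne by auto
  show ?thesis
  proof (cases "l = []")
    case True
    then show ?thesis using assms pne
      by (cases "r = []") (auto simp: is_path_append)
  next
    case False
    then show ?thesis using assms pne
      by (cases "r = []") (auto simp: is_path_append)
  qed
qed

lemma wstep_ctx:
  assumes "wstep p q" "is_path (l @ p @ r)"
  shows "wstep (l @ p @ r) (l @ q @ r)"
proof -
  from assms(1) have pp: "is_path p" "is_path q" "pstart p = pstart q" "pend p = pend q"
    by (auto dest: wstep_props)
  from path_ctx[OF pp assms(2)] have pc: "is_path (l @ q @ r)" "pstart (l @ p @ r) = pstart (l @ q @ r)"
      "pend (l @ p @ r) = pend (l @ q @ r)" by auto
  from assms(1) have moves:
    "(\<exists>xs ys a. p = xs @ ys \<and> q = xs @ [iota a] @ ys) \<or>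
     (\<exists>xs ys o' a e. e \<le> a \<and> a \<le> o' \<and>
         p = xs @ [edge o' a, edge a e] @ ys \<and> q = xs @ [edge o' e] @ ys) \<or>
     (\<exists>xs ys b. p = xs @ [opp b, b] @ ys \<and> q = xs @ [iota (d1 b)] @ ys)"
    by (simp add: wstep_def)
  from moves have D: "(\<exists>xs ys a. l @ p @ r = xs @ ys \<and> l @ q @ r = xs @ [iota a] @ ys) \<or>
     (\<exists>xs ys o' a e. e \<le> a \<and> a \<le> o' \<and>
         l @ p @ r = xs @ [edge o' a, edge a e] @ ys \<and> l @ q @ r = xs @ [edge o' e] @ ys) \<or>
     (\<exists>xs ys b. l @ p @ r = xs @ [opp b, b] @ ys \<and> l @ q @ r = xs @ [iota (d1 b)] @ ys)"
  proof (elim disjE exE conjE)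
    fix xs ys a assume "p = xs @ ys" "q = xs @ [iota a] @ ys"
    then show ?thesis
      by (intro disjI1 exI[of _ "l @ xs"] exI[of _ "ys @ r"] exI[of _ a]) simp
  next
    fix xs ys o' a e assume "e \<le> a" "a \<le> o'" "p = xs @ [edge o' a, edge a e] @ ys" "q = xs @ [edge o' e] @ ys"
    then show ?thesis
      by (intro disjI2 disjI1 exI[of _ "l @ xs"] exI[of _ "ys @ r"] exI[of _ o'] exI[of _ a] exI[of _ e]) simp
  next
    fix xs ys b assume "p = xs @ [opp b, b] @ ys" "q = xs @ [iota (d1 b)] @ ys"
    then show ?thesis
      by (intro disjI2 exI[of _ "l @ xs"] exI[of _ "ys @ r"] exI[of _ b]) simp
  qed
  show ?thesis unfolding wstep_def by (intro conjI assms(2) pc(1) pc(2) pc(3) D)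
qed

lemma weq_ctx:
  assumes "weq p q" "is_path p" "is_path (l @ p @ r)"
  shows "weq (l @ p @ r) (l @ q @ r)"
  using assms(1) unfolding weq_def
proof (induction rule: rtranclp_induct)
  case base then show ?case by simp
next
  case (step y z)
  have y: "is_path y" "pstart y = pstart p" "pend y = pend p"
    using weq_path[OF step.hyps(1)[folded weq_def] assms(2)] by auto
  have ly: "is_path (l @ y @ r)"
    using path_ctx[OF assms(2) y(1) y(2)[symmetric] y(3)[symmetric] assms(3)] by simp
  from step.hyps(2) have "symclp wstep (l @ y @ r) (l @ z @ r)"
  proof (cases rule: symclpE)
    case base then show ?thesis using wstep_ctx[OF base ly] by (simp add: symclp_def)
  next
    case sym
    then have z: "is_path z" "pstart z = pstart y" "pend z = pend y" by (auto dest: wstep_props)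
    have "is_path (l @ z @ r)" using path_ctx[OF y(1) z(1) z(2)[symmetric] z(3)[symmetric] ly] by simp
    then show ?thesis using wstep_ctx[OF sym] by (simp add: symclp_def)
  qed
  then show ?case using step.IH by (simp add: rtranclp.rtrancl_into_rtrancl)
qed

lemma weq_app:
  assumes "weq p p'" "weq q q'" "is_path p" "is_path q" "pstart p = pend q"
  shows "weq (p @ q) (p' @ q')"
proof -
  have pq: "is_path (p @ q)" using assms path_ne is_path_append by blast
  have 1: "weq (p @ q) (p' @ q)" using weq_ctx[of p p' "[]" q] assms pq by simp
  have p': "is_path p'" "pstart p' = pstart p" using weq_path[OF assms(1,3)] by auto
  have "is_path (p' @ q)" using p' assms path_ne is_path_append by metis
  then have 2: "weq (p' @ q) (p' @ q')" using weq_ctx[of q q' p' "[]"] assms by simp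
  show ?thesis using weq_trans[OF 1 2] .
qed

lemma is_simp1_iota[simp]: "is_simp1 (iota a)" by (simp add: is_simp1_def iota_def d0_def d1_def supp_def)
lemma iota_d[simp]: "d0 (iota a) = a" "d1 (iota a) = a" "supp (iota a) = a"
  by (simp_all add: iota_def d0_def d1_def supp_def)
lemma opp_d[simp]: "d0 (opp b) = d1 b" "d1 (opp b) = d0 b" "supp (opp b) = supp b"
  by (simp_all add: opp_def d0_def d1_def supp_def)
lemma opp_opp[simp]: "opp (opp b) = b" by (simp add: opp_def d0_def d1_def supp_def)
lemma opp_simp1[simp]: "is_simp1 (opp b) \<longleftrightarrow> is_simp1 b" by (auto simp: is_simp1_def)
lemma edge_d[simp]: "d0 (edge o' a) = o'" "d1 (edge o' a) = a" "supp (edge o' a) = o'"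
  by (simp_all add: edge_def d0_def d1_def supp_def)
lemma edge_simp1[simp]: "a \<le> o' \<Longrightarrow> is_simp1 (edge o' a)" by (simp add: is_simp1_def)

lemma iota_left: "is_path p \<Longrightarrow> weq ([iota (pend p)] @ p) p"
proof -
  assume p: "is_path p"
  have "is_path ([iota (pend p)] @ p)" using p path_ne[OF p] by (simp add: is_path_Cons pend_def)
  moreover have "\<exists>xs ys a. p = xs @ ys \<and> [iota (pend p)] @ p = xs @ [iota a] @ ys"
    by (rule exI[of _ "[]"], rule exI[of _ p], rule exI[of _ "pend p"]) simp
  ultimately have "wstep p ([iota (pend p)] @ p)" unfolding wstep_def using p path_ne[OF p]
    by (simp add: pend_def)
  then show ?thesis by (rule wstep_weq2)
qed

lemma iota_right: "is_path p \<Longrightarrow> weq (p @ [iota (pstart p)]) p"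
proof -
  assume p: "is_path p"
  have "is_path (p @ [iota (pstart p)])" using p path_ne[OF p] by (subst is_path_append) auto
  moreover have "\<exists>xs ys a. p = xs @ ys \<and> p @ [iota (pstart p)] @ [] = xs @ [iota a] @ ys"
    by (rule exI[of _ p], rule exI[of _ "[]"], rule exI[of _ "pstart p"]) simp
  ultimately have "wstep p (p @ [iota (pstart p)] @ [])" unfolding wstep_def using p path_ne[OF p]
    by (simp add: pstart_def)
  then show ?thesis by (auto intro: wstep_weq2)
qed

lemma opp_path_Nil[simp]: "opp_path [] = []" by (simp add: opp_path_def)
lemma opp_path_Cons[simp]: "opp_path (x # xs) = opp_path xs @ [opp x]" by (simp add: opp_path_def)
lemma opp_path_append[simp]: "opp_path (xs @ ys) = opp_path ys @ opp_path xs" by (simp add: opp_path_def)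
lemma opp_path_opp_path[simp]: "opp_path (opp_path p) = p" by (simp add: opp_path_def rev_map comp_def)
lemma opp_path_ne[simp]: "opp_path p = [] \<longleftrightarrow> p = []" by (simp add: opp_path_def)
lemma set_opp_path[simp]: "set (opp_path p) = opp ` set p" by (simp add: opp_path_def)

lemma opp_path_props: "is_path p \<Longrightarrow> is_path (opp_path p) \<and> pstart (opp_path p) = pend p \<and> pend (opp_path p) = pstart p"
proof (induction p)
  case Nil then show ?case by (simp add: is_path_def)
next
  case (Cons x xs)
  show ?case
  proof (cases "xs = []")
    case True then show ?thesis using Cons by (simp add: pstart_def pend_def)
  next
    case False
    then have "is_path xs" "is_simp1 x" "d1 x = d0 (hd xs)" using Cons.prems is_path_Cons[OF False] by simp_all
    then show ?thesis using Cons.IH False by (auto simp: is_path_append pstart_def pend_def)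
  qed
qed

lemma cancel_right: "is_path p \<Longrightarrow> weq (p @ opp_path p) [iota (pend p)]"
proof (induction p)
  case Nil then show ?case by (simp add: is_path_def)
next
  case (Cons x xs)
  have x: "is_simp1 x" using Cons.prems
    by (cases "xs = []") (auto simp: is_path_Cons)
  have base: "weq [x, opp x] [iota (d0 x)]"
  proof -
    have "is_path [x, opp x]" using x by (simp add: is_path_Cons)
    moreover have "\<exists>xs ys b. [x, opp x] = xs @ [opp b, b] @ ys \<and> [iota (d0 x)] = xs @ [iota (d1 b)] @ ys"
      by (rule exI[of _ "[]"], rule exI[of _ "[]"], rule exI[of _ "opp x"]) simp
    ultimately have "wstep [x, opp x] [iota (d0 x)]" unfolding wstep_def
      by (simp add: pstart_def pend_def)
    then show ?thesis by (rule wstep_weq)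
  qed
  show ?case
  proof (cases "xs = []")
    case True then show ?thesis using base by simp
  next
    case False
    then have xs: "is_path xs" "d1 x = d0 (hd xs)" using Cons.prems is_path_Cons[OF False] by simp_all
    have oxs: "is_path (opp_path xs)" "pstart (opp_path xs) = pend xs" "pend (opp_path xs) = pstart xs"
      using opp_path_props[OF xs(1)] by auto
    have xxs: "is_path (xs @ opp_path xs)" using xs oxs False path_ne is_path_append by metis
    have big: "is_path ([x] @ (xs @ opp_path xs) @ [opp x])"
      using Cons.prems oxs False by (auto simp: is_path_append is_path_Cons pend_def)
    have 1: "weq ([x] @ (xs @ opp_path xs) @ [opp x]) ([x] @ [iota (pend xs)] @ [opp x])"
      using weq_ctx[OF Cons.IH[OF xs(1)] xxs big] .
    have ex: "\<exists>xs' ys a. [x] @ [opp x] = xs' @ ys \<and> [x] @ [iota (pend xs)] @ [opp x] = xs' @ [iota a] @ ys"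
      by (rule exI[of _ "[x]"], rule exI[of _ "[opp x]"], rule exI[of _ "pend xs"]) simp
    have "is_path ([x] @ [iota (pend xs)] @ [opp x])" using x xs False
      by (simp add: is_path_Cons pend_def)
    then have "wstep ([x] @ [opp x]) ([x] @ [iota (pend xs)] @ [opp x])"
      unfolding wstep_def using x xs ex by (simp add: is_path_Cons pstart_def pend_def)
    then have 2: "weq ([x] @ [iota (pend xs)] @ [opp x]) [x, opp x]" by (auto dest: wstep_weq2)
    show ?thesis using weq_trans[OF weq_trans[OF 1 2] base] by simp
  qed
qed

lemma cancel_left: "is_path p \<Longrightarrow> weq (opp_path p @ p) [iota (pstart p)]"
  using cancel_right[of "opp_path p"] opp_path_props[of p] by simp

lemma L1: assumes "is_path x" "is_path c" "pstart x = pend c"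
  shows "weq (x @ c @ opp_path c) x"
proof -
  have oc: "is_path (opp_path c)" "pstart (opp_path c) = pend c" "pend (opp_path c) = pstart c"
    using opp_path_props[OF assms(2)] by auto
  have cc: "is_path (c @ opp_path c)" using assms oc path_ne is_path_append by metis
  have "is_path (x @ (c @ opp_path c) @ [])" using path_app[OF assms(1) cc] assms(2,3) by simp
  then have 1: "weq (x @ (c @ opp_path c) @ []) (x @ [iota (pend c)] @ [])"
    using weq_ctx[OF cancel_right[OF assms(2)] cc] by blast
  have 2: "weq (x @ [iota (pstart x)]) x" by (rule iota_right[OF assms(1)])
  show ?thesis using weq_trans[OF 1] 2 assms(3) by simp
qed

lemma L2: assumes "is_path c" "is_path x" "pstart c = pend x"
  shows "weq (opp_path c @ c @ x) x"
proof -
  have oc: "is_path (opp_path c)" "pstart (opp_path c) = pend c" "pend (opp_path c) = pstart c"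
    using opp_path_props[OF assms(1)] by auto
  have cc: "is_path (opp_path c @ c)" using assms oc path_ne is_path_append by metis
  have "is_path ([] @ (opp_path c @ c) @ x)" using path_app[OF cc assms(2)] assms by simp
  then have 1: "weq ([] @ (opp_path c @ c) @ x) ([] @ [iota (pstart c)] @ x)"
    using weq_ctx[OF cancel_left[OF assms(1)] cc] by blast
  have 2: "weq ([iota (pend x)] @ x) x" by (rule iota_left[OF assms(2)])
  show ?thesis using weq_trans[OF 1] 2 assms(3) by simp
qed

lemma weq_opp:
  assumes "weq p q" "is_path p"
  shows "weq (opp_path p) (opp_path q)"
proof -
  have q: "is_path q" "pstart q = pstart p" "pend q = pend p" using weq_path[OF assms] by auto
  have op: "is_path (opp_path p)" "pstart (opp_path p) = pend p" "pend (opp_path p) = pstart p"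
    using opp_path_props[OF assms(2)] by auto
  have oq: "is_path (opp_path q)" "pstart (opp_path q) = pend q" "pend (opp_path q) = pstart q"
    using opp_path_props[OF q(1)] by auto
  have 1: "weq (opp_path q @ q @ opp_path p) (opp_path p)"
    using L2[OF q(1) op(1)] q op by simp
  have qop: "is_path (q @ opp_path p)" using q op path_ne is_path_append by metis
  have "is_path (opp_path q @ q @ opp_path p)" using path_app[OF oq(1) qop] q op oq by simp
  then have 2: "weq (opp_path q @ q @ opp_path p) (opp_path q @ p @ opp_path p)"
    using weq_ctx[OF weq_sym[OF assms(1)] q(1)] by simp
  have 3: "weq (opp_path q @ p @ opp_path p) (opp_path q)"
    using L1[OF oq(1) assms(2)] q oq by simp
  show ?thesis using weq_trans[OF weq_trans[OF weq_sym[OF 1] 2] 3] .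
qed

lemma mem_wclass: "q \<in> wclass p \<longleftrightarrow> weq p q" by (simp add: wclass_def)

lemma wclass_eq: "weq p q \<Longrightarrow> wclass p = wclass q"
  unfolding wclass_def using weq_trans weq_sym by blast

lemma wclass_eq_iff: "wclass p = wclass q \<longleftrightarrow> weq p q"
proof
  assume "wclass p = wclass q"
  then have "q \<in> wclass p" by (simp add: mem_wclass)
  then show "weq p q" by (simp add: mem_wclass)
qed (rule wclass_eq)

lemma loops_iff: "p \<in> loops o' \<longleftrightarrow> is_path p \<and> pstart p = o' \<and> pend p = o'"
  by (simp add: loops_def)

lemma loops_app: "p \<in> loops o' \<Longrightarrow> q \<in> loops o' \<Longrightarrow> p @ q \<in> loops o'"
  by (auto simp: loops_iff intro: path_app)

lemma loops_iota: "[iota o'] \<in> loops o'"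
  by (simp add: loops_iff pstart_def pend_def)

lemma loops_opp: "p \<in> loops o' \<Longrightarrow> opp_path p \<in> loops o'"
  using opp_path_props by (auto simp: loops_iff)

lemma carrier_Lambda: "carrier (Lambda o') = wclass ` loops o'" by (simp add: Lambda_def)
lemma one_Lambda: "\<one>\<^bsub>Lambda o'\<^esub> = wclass [iota o']" by (simp add: Lambda_def)

lemma cmult: assumes "is_path p" "is_path q" "pstart p = pend q"
  shows "{r. \<exists>p'\<in>wclass p. \<exists>q'\<in>wclass q. weq (p' @ q') r} = wclass (p @ q)"
proof
  show "{r. \<exists>p'\<in>wclass p. \<exists>q'\<in>wclass q. weq (p' @ q') r} \<subseteq> wclass (p @ q)"
  proof
    fix r assume "r \<in> {r. \<exists>p'\<in>wclass p. \<exists>q'\<in>wclass q. weq (p' @ q') r}"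
    then obtain p' q' where pq: "weq p p'" "weq q q'" "weq (p' @ q') r" by (auto simp: mem_wclass)
    have "weq (p @ q) (p' @ q')" by (rule weq_app[OF pq(1,2) assms])
    then show "r \<in> wclass (p @ q)" using weq_trans pq(3) by (auto simp: mem_wclass)
  qed
next
  show "wclass (p @ q) \<subseteq> {r. \<exists>p'\<in>wclass p. \<exists>q'\<in>wclass q. weq (p' @ q') r}"
  proof
    fix r assume "r \<in> wclass (p @ q)"
    then have "weq (p @ q) r" by (simp add: mem_wclass)
    moreover have "p \<in> wclass p" "q \<in> wclass q" by (simp_all add: mem_wclass)
    ultimately show "r \<in> {r. \<exists>p'\<in>wclass p. \<exists>q'\<in>wclass q. weq (p' @ q') r}" by blast
  qed
qed

lemma Lambda_mult_w2: "p \<in> loops o' \<Longrightarrow> q \<in> loops o' \<Longrightarrow> wclass p \<otimes>\<^bsub>Lambda a\<^esub> wclass q = wclass (p @ q)"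
proof -
  assume "p \<in> loops o'" "q \<in> loops o'"
  then have pp: "is_path p" "is_path q" "pstart p = pend q" by (auto simp: loops_iff)
  show ?thesis using cmult[OF pp] by (simp add: Lambda_def)
qed

lemma Lambda_mult_w: "p \<in> loops o' \<Longrightarrow> q \<in> loops o' \<Longrightarrow> wclass p \<otimes>\<^bsub>Lambda o'\<^esub> wclass q = wclass (p @ q)"
  by (rule Lambda_mult_w2)

lemma group_Lambda: "group (Lambda o')"
proof (rule groupI)
  fix x y assume "x \<in> carrier (Lambda o')" "y \<in> carrier (Lambda o')"
  then obtain p q where "p \<in> loops o'" "q \<in> loops o'" "x = wclass p" "y = wclass q"
    by (auto simp: carrier_Lambda)
  then show "x \<otimes>\<^bsub>Lambda o'\<^esub> y \<in> carrier (Lambda o')"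
    by (simp add: Lambda_mult_w carrier_Lambda loops_app)
next
  show "\<one>\<^bsub>Lambda o'\<^esub> \<in> carrier (Lambda o')"
    by (simp add: one_Lambda carrier_Lambda loops_iota)
next
  fix x y z assume "x \<in> carrier (Lambda o')" "y \<in> carrier (Lambda o')" "z \<in> carrier (Lambda o')"
  then obtain p q r where "p \<in> loops o'" "q \<in> loops o'" "r \<in> loops o'" "x = wclass p" "y = wclass q" "z = wclass r"
    by (auto simp: carrier_Lambda)
  then show "x \<otimes>\<^bsub>Lambda o'\<^esub> y \<otimes>\<^bsub>Lambda o'\<^esub> z = x \<otimes>\<^bsub>Lambda o'\<^esub> (y \<otimes>\<^bsub>Lambda o'\<^esub> z)"
    by (simp add: Lambda_mult_w loops_app)
next
  fix x assume "x \<in> carrier (Lambda o')"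
  then obtain p where p: "p \<in> loops o'" "x = wclass p" by (auto simp: carrier_Lambda)
  have "wclass ([iota o'] @ p) = wclass p"
    using iota_left[of p] p by (simp add: loops_iff wclass_eq_iff)
  then show "\<one>\<^bsub>Lambda o'\<^esub> \<otimes>\<^bsub>Lambda o'\<^esub> x = x"
    using p by (simp add: one_Lambda Lambda_mult_w loops_iota)
next
  fix x assume "x \<in> carrier (Lambda o')"
  then obtain p where p: "p \<in> loops o'" "x = wclass p" by (auto simp: carrier_Lambda)
  have "wclass (opp_path p @ p) = wclass [iota o']"
    using cancel_left[of p] p by (simp add: loops_iff wclass_eq_iff)
  then have "wclass (opp_path p) \<otimes>\<^bsub>Lambda o'\<^esub> x = \<one>\<^bsub>Lambda o'\<^esub>"
    using p by (simp add: one_Lambda Lambda_mult_w loops_opp)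
  moreover have "wclass (opp_path p) \<in> carrier (Lambda o')"
    using p by (simp add: carrier_Lambda loops_opp)
  ultimately show "\<exists>y\<in>carrier (Lambda o'). y \<otimes>\<^bsub>Lambda o'\<^esub> x = \<one>\<^bsub>Lambda o'\<^esub>" by blast
qed

lemma Lambda_inv: "p \<in> loops o' \<Longrightarrow> inv\<^bsub>Lambda o'\<^esub> (wclass p) = wclass (opp_path p)"
proof -
  assume p: "p \<in> loops o'"
  have "wclass (opp_path p @ p) = wclass [iota o']"
    using cancel_left[of p] p by (simp add: loops_iff wclass_eq_iff)
  then have "wclass (opp_path p) \<otimes>\<^bsub>Lambda o'\<^esub> wclass p = \<one>\<^bsub>Lambda o'\<^esub>"
    using p by (simp add: one_Lambda Lambda_mult_w loops_opp)
  moreover have "wclass p \<in> carrier (Lambda o')" "wclass (opp_path p) \<in> carrier (Lambda o')"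
    using p by (simp_all add: carrier_Lambda loops_opp)
  ultimately show ?thesis using group.inv_equality[OF group_Lambda] by blast
qed

definition lloops :: "'k::order \<Rightarrow> 'k simp1 list set" where
  "lloops o' = {p \<in> loops o'. \<forall>b\<in>set p. supp b \<le> o'}"

lemma lloops_sub: "p \<in> lloops o' \<Longrightarrow> p \<in> loops o'" by (simp add: lloops_def)
lemma lloops_app: "p \<in> lloops o' \<Longrightarrow> q \<in> lloops o' \<Longrightarrow> p @ q \<in> lloops o'"
  by (auto simp: lloops_def loops_app)
lemma lloops_opp: "p \<in> lloops o' \<Longrightarrow> opp_path p \<in> lloops o'"
  by (auto simp: lloops_def loops_opp)
lemma lloops_iota: "[iota o'] \<in> lloops o'"
  by (simp add: lloops_def loops_iota)

lemma carrier_LambdaL: "carrier (LambdaL o') = wclass ` lloops o'"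
proof
  show "carrier (LambdaL o') \<subseteq> wclass ` lloops o'"
  proof
    fix A assume "A \<in> carrier (LambdaL o')"
    then obtain p0 p where p0: "p0 \<in> loops o'" "A = wclass p0" and p: "p \<in> A" "\<forall>b\<in>set p. supp b \<le> o'"
      by (auto simp: LambdaL_def carrier_Lambda)
    have w: "weq p0 p" using p p0 by (simp add: mem_wclass)
    then have "p \<in> loops o'" using weq_path[of p0 p] p0 by (auto simp: loops_iff)
    moreover have "wclass p0 = wclass p" using wclass_eq[OF w] .
    ultimately show "A \<in> wclass ` lloops o'" using p p0 by (auto simp: lloops_def)
  qed
next
  show "wclass ` lloops o' \<subseteq> carrier (LambdaL o')"
    by (auto simp: LambdaL_def carrier_Lambda lloops_def mem_wclass)
qed

lemma LambdaL_alt: "LambdaL o' = (Lambda o')\<lparr>carrier := wclass ` lloops o'\<rparr>"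
  using carrier_LambdaL[of o'] by (simp add: LambdaL_def)

lemma LambdaL_mult: "x \<otimes>\<^bsub>LambdaL o'\<^esub> y = x \<otimes>\<^bsub>Lambda o'\<^esub> y" by (simp add: LambdaL_def)

lemma LambdaL_mult_w: "p \<in> lloops o' \<Longrightarrow> q \<in> lloops o' \<Longrightarrow> wclass p \<otimes>\<^bsub>LambdaL o'\<^esub> wclass q = wclass (p @ q)"
  by (simp add: LambdaL_mult Lambda_mult_w lloops_sub)

lemma subgroup_LambdaL: "subgroup (wclass ` lloops o') (Lambda o')"
proof (rule group.subgroupI[OF group_Lambda])
  show "wclass ` lloops o' \<subseteq> carrier (Lambda o')" by (auto simp: carrier_Lambda lloops_def)
  show "wclass ` lloops o' \<noteq> {}" using lloops_iota by blast
  fix a assume "a \<in> wclass ` lloops o'"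
  then obtain p where "p \<in> lloops o'" "a = wclass p" by auto
  then show "inv\<^bsub>Lambda o'\<^esub> a \<in> wclass ` lloops o'" by (simp add: Lambda_inv lloops_sub lloops_opp)
next
  fix a b assume "a \<in> wclass ` lloops o'" "b \<in> wclass ` lloops o'"
  then obtain p q where "p \<in> lloops o'" "a = wclass p" "q \<in> lloops o'" "b = wclass q" by auto
  then show "a \<otimes>\<^bsub>Lambda o'\<^esub> b \<in> wclass ` lloops o'" by (simp add: Lambda_mult_w lloops_sub lloops_app)
qed

lemma group_LambdaL: "group (LambdaL o')"
  unfolding LambdaL_alt using subgroup.subgroup_is_group[OF subgroup_LambdaL group_Lambda] .

lemma generic_hom:
  assumes cG: "carrier G = wclass ` P" and cH: "carrier H = wclass ` Q"
    and mG: "\<And>p q. p \<in> P \<Longrightarrow> q \<in> P \<Longrightarrow> wclass p \<otimes>\<^bsub>G\<^esub> wclass q = wclass (p @ q)"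
    and mH: "\<And>p q. p \<in> Q \<Longrightarrow> q \<in> Q \<Longrightarrow> wclass p \<otimes>\<^bsub>H\<^esub> wclass q = wclass (p @ q)"
    and Pc: "\<And>p q. p \<in> P \<Longrightarrow> q \<in> P \<Longrightarrow> p @ q \<in> P"
    and F: "\<And>p. p \<in> P \<Longrightarrow> F (wclass p) = wclass (f p)"
    and fQ: "\<And>p. p \<in> P \<Longrightarrow> f p \<in> Q"
    and fm: "\<And>p q. p \<in> P \<Longrightarrow> q \<in> P \<Longrightarrow> weq (f (p @ q)) (f p @ f q)"
  shows "F \<in> hom G H"
proof -
  have "F \<in> carrier G \<rightarrow> carrier H" using cG cH F fQ by auto
  moreover have "\<forall>x\<in>carrier G. \<forall>y\<in>carrier G. F (x \<otimes>\<^bsub>G\<^esub> y) = F x \<otimes>\<^bsub>H\<^esub> F y"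
  proof (intro ballI)
    fix x y assume "x \<in> carrier G" "y \<in> carrier G"
    then obtain p q where pq: "p \<in> P" "q \<in> P" "x = wclass p" "y = wclass q" using cG by auto
    have "F (x \<otimes>\<^bsub>G\<^esub> y) = wclass (f (p @ q))" using pq mG Pc F by simp
    also have "\<dots> = wclass (f p @ f q)" using fm pq wclass_eq by blast
    also have "\<dots> = F x \<otimes>\<^bsub>H\<^esub> F y" using pq F fQ mH by simp
    finally show "F (x \<otimes>\<^bsub>G\<^esub> y) = F x \<otimes>\<^bsub>H\<^esub> F y" .
  qed
  ultimately show ?thesis by (simp add: hom_def)
qed

lemma generic_inj:
  assumes cG: "carrier G = wclass ` P"
    and F: "\<And>p. p \<in> P \<Longrightarrow> F (wclass p) = wclass (f p)"
    and fi: "\<And>p q. p \<in> P \<Longrightarrow> q \<in> P \<Longrightarrow> weq (f p) (f q) \<Longrightarrow> weq p q"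
  shows "inj_on F (carrier G)"
proof (rule inj_onI)
  fix x y assume "x \<in> carrier G" "y \<in> carrier G" "F x = F y"
  then obtain p q where pq: "p \<in> P" "q \<in> P" "x = wclass p" "y = wclass q" and "F x = F y" using cG by auto
  then have "wclass (f p) = wclass (f q)" using F by simp
  then have "weq p q" using fi pq wclass_eq_iff by blast
  then show "x = y" using pq wclass_eq by simp
qed

lemma generic_surj:
  assumes cG: "carrier G = wclass ` P" and cH: "carrier H = wclass ` Q"
    and F: "\<And>p. p \<in> P \<Longrightarrow> F (wclass p) = wclass (f p)"
    and fQ: "\<And>p. p \<in> P \<Longrightarrow> f p \<in> Q"
    and fs: "\<And>q. q \<in> Q \<Longrightarrow> \<exists>p\<in>P. weq (f p) q"
  shows "F ` carrier G = carrier H"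
proof
  show "F ` carrier G \<subseteq> carrier H" using cG cH F fQ by auto
  show "carrier H \<subseteq> F ` carrier G"
  proof
    fix y assume "y \<in> carrier H"
    then obtain q where q: "q \<in> Q" "y = wclass q" using cH by auto
    then obtain p where p: "p \<in> P" "weq (f p) q" using fs by blast
    then have "y = F (wclass p)" using q F[OF p(1)] wclass_eq[OF p(2)] by simp
    then show "y \<in> F ` carrier G" using p cG by auto
  qed
qed

definition cnj :: "'k simp1 list \<Rightarrow> 'k simp1 list \<Rightarrow> 'k simp1 list" where
  "cnj c p = c @ p @ opp_path c"

lemma cnj_loop: assumes "is_path c" "p \<in> loops (pstart c)" shows "cnj c p \<in> loops (pend c)"
proof -
  have oc: "is_path (opp_path c)" "pstart (opp_path c) = pend c" "pend (opp_path c) = pstart c"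
    using opp_path_props[OF assms(1)] by auto
  have p: "is_path p" "pstart p = pstart c" "pend p = pstart c" using assms(2) by (auto simp: loops_iff)
  have "is_path (p @ opp_path c)" using path_app[OF p(1) oc(1)] p oc by simp
  then show ?thesis using path_app[OF assms(1)] p oc assms(1) by (simp add: cnj_def loops_iff)
qed

lemma cnj_mult: assumes c: "is_path c" and p: "p \<in> loops (pstart c)" and q: "q \<in> loops (pstart c)"
  shows "weq (cnj c (p @ q)) (cnj c p @ cnj c q)"
proof -
  have oc: "is_path (opp_path c)" "pstart (opp_path c) = pend c" "pend (opp_path c) = pstart c"
    using opp_path_props[OF c] by auto
  have pp: "is_path p" "pstart p = pstart c" "pend p = pstart c"
    "is_path q" "pstart q = pstart c" "pend q = pstart c" using p q by (auto simp: loops_iff)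
  define x where "x = q @ opp_path c"
  have x: "is_path x" "pend x = pstart c" "pstart x = pend c" using path_app[OF pp(4) oc(1)] pp oc by (auto simp: x_def)
  have 1: "weq (opp_path c @ c @ x) x" using L2[OF c x(1)] x by simp
  have ocx: "is_path (opp_path c @ c @ x)" using path_app[OF oc(1) path_app[OF c x(1)]] x oc c by simp
  have "is_path ((c @ p) @ (opp_path c @ c @ x) @ [])"
    using path_app[OF path_app[OF c pp(1)] ocx] pp oc by simp
  then have "weq ((c @ p) @ (opp_path c @ c @ x) @ []) ((c @ p) @ x @ [])"
    using weq_ctx[OF 1 ocx] by blast
  then show ?thesis by (simp add: cnj_def x_def weq_sym)
qed

lemma cnj_unconj: assumes c: "is_path c" and p: "p \<in> loops (pstart c)"
  shows "weq (opp_path c @ cnj c p @ c) p"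
proof -
  have oc: "is_path (opp_path c)" "pstart (opp_path c) = pend c" "pend (opp_path c) = pstart c"
    using opp_path_props[OF c] by auto
  have pp: "is_path p" "pstart p = pstart c" "pend p = pstart c" using p by (auto simp: loops_iff)
  define x where "x = p @ opp_path c @ c"
  have x: "is_path x" "pend x = pstart c" using path_app[OF pp(1) path_app[OF oc(1) c]] pp oc by (auto simp: x_def)
  have 1: "weq (opp_path c @ c @ x) x" using L2[OF c x(1)] x by simp
  have 2: "weq (p @ opp_path c @ opp_path (opp_path c)) p" using L1[OF pp(1) oc(1)] pp oc by simp
  show ?thesis using weq_trans[OF 1] 2 by (simp add: cnj_def x_def)
qed

lemma cnj_cong: assumes c: "is_path c" and cc: "weq c c'" and p: "p \<in> loops (pstart c)"
  shows "weq (cnj c p) (cnj c' p)"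
proof -
  have oc: "is_path (opp_path c)" "pstart (opp_path c) = pend c" "pend (opp_path c) = pstart c"
    using opp_path_props[OF c] by auto
  have pp: "is_path p" "pstart p = pstart c" "pend p = pstart c" using p by (auto simp: loops_iff)
  have e1: "pstart p = pend (opp_path c)" using pp(2) oc(3) by simp
  have 1: "weq (p @ opp_path c) (p @ opp_path c')"
    by (rule weq_app[OF weq_refl weq_opp[OF cc c] pp(1) oc(1) e1])
  have e2: "pstart c = pend (p @ opp_path c)" using pp(1) pp(3) by simp
  have "weq (c @ (p @ opp_path c)) (c' @ (p @ opp_path c'))"
    by (rule weq_app[OF cc 1 c path_app[OF pp(1) oc(1) e1] e2])
  then show ?thesis by (simp add: cnj_def)
qed

lemma cnj_inj: assumes c: "is_path c" and p: "p \<in> loops (pstart c)" and q: "q \<in> loops (pstart c)"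
  and w: "weq (cnj c p) (cnj c q)"
  shows "weq p q"
proof -
  have oc: "is_path (opp_path c)" "pstart (opp_path c) = pend c" "pend (opp_path c) = pstart c"
    using opp_path_props[OF c] by auto
  have cp: "cnj c p \<in> loops (pend c)" using cnj_loop[OF c p] .
  then have cpp: "is_path (cnj c p)" "pstart (cnj c p) = pend c" "pend (cnj c p) = pend c"
    unfolding loops_iff by auto
  have a1: "is_path (cnj c p @ c)" by (rule path_app[OF cpp(1) c cpp(2)])
  have e: "pstart (opp_path c) = pend (cnj c p @ c)" using pend_app_path[OF cpp(1), of c] cpp(3) oc(2) by simp
  have a2: "is_path (opp_path c @ cnj c p @ c)" by (rule path_app[OF oc(1) a1 e])
  have "weq (opp_path c @ cnj c p @ c) (opp_path c @ cnj c q @ c)"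
    by (rule weq_ctx[OF w cpp(1) a2])
  then show ?thesis using cnj_unconj[OF c p] cnj_unconj[OF c q] weq_trans weq_sym by blast
qed

lemma cnj_surj: assumes c: "is_path c" and q: "q \<in> loops (pend c)"
  shows "opp_path c @ q @ c \<in> loops (pstart c) \<and> weq (cnj c (opp_path c @ q @ c)) q"
proof -
  have oc: "is_path (opp_path c)" "pstart (opp_path c) = pend c" "pend (opp_path c) = pstart c"
    using opp_path_props[OF c] by auto
  have l: "q \<in> loops (pstart (opp_path c))" using q oc(2) by simp
  have "weq (opp_path (opp_path c) @ cnj (opp_path c) q @ opp_path c) q" by (rule cnj_unconj[OF oc(1) l])
  then have w: "weq (c @ cnj (opp_path c) q @ opp_path c) q" by (simp only: opp_path_opp_path)
  have e: "cnj c (opp_path c @ q @ c) = c @ cnj (opp_path c) q @ opp_path c" by (simp add: cnj_def)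
  have m0: "cnj (opp_path c) q \<in> loops (pend (opp_path c))" by (rule cnj_loop[OF oc(1) l])
  have m: "opp_path c @ q @ c \<in> loops (pstart c)" using m0 oc(3) by (simp add: cnj_def)
  show ?thesis using m w e by simp
qed




lemma edge_path: "o' \<le> a \<Longrightarrow> is_path [edge a o'] \<and> pstart [edge a o'] = o' \<and> pend [edge a o'] = a"
  by (simp add: pstart_def pend_def)

lemma lam_w: assumes oa: "o' \<le> a" and p: "p \<in> loops o'"
  shows "lam a o' (wclass p) = wclass (cnj [edge a o'] p)"
proof -
  have c: "is_path [edge a o']" "pstart [edge a o'] = o'" "pend [edge a o'] = a" using edge_path[OF oa] by auto
  have cl: "cnj [edge a o'] p \<in> loops a" using cnj_loop[OF c(1)] c p by simp
  have eq: "cnj [edge a o'] p = [edge a o'] @ p @ [opp (edge a o')]" by (simp add: cnj_def)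
  have pp: "is_path p" using p by (simp add: loops_iff)
  show ?thesis
  proof (rule Set.set_eqI)
    fix r
    show "r \<in> lam a o' (wclass p) \<longleftrightarrow> r \<in> wclass (cnj [edge a o'] p)"
    proof
      assume "r \<in> lam a o' (wclass p)"
      then obtain p' where "weq p p'" "weq ([edge a o'] @ p' @ [opp (edge a o')]) r"
        by (auto simp: lam_def mem_wclass)
      moreover have "weq ([edge a o'] @ p @ [opp (edge a o')]) ([edge a o'] @ p' @ [opp (edge a o')])"
      proof -
        have "is_path (cnj [edge a o'] p)" using cl by (simp add: loops_iff)
        then have pth: "is_path ([edge a o'] @ p @ [opp (edge a o')])" unfolding eq .
        show ?thesis by (rule weq_ctx[OF \<open>weq p p'\<close> pp pth])
      qed
      ultimately show "r \<in> wclass (cnj [edge a o'] p)" using eq weq_trans by (auto simp: mem_wclass)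
    next
      assume "r \<in> wclass (cnj [edge a o'] p)"
      then show "r \<in> lam a o' (wclass p)" using eq by (auto simp: lam_def mem_wclass)
    qed
  qed
qed

lemma set_cnj: "set (cnj c p) = set c \<union> set p \<union> opp ` set c" by (auto simp: cnj_def)

lemma lam_props:
  assumes oa: "o' \<le> a"
  shows "lam a o' \<in> iso (Lambda o') (Lambda a) \<and> lam a o' \<in> hom (LambdaL o') (LambdaL a)
        \<and> inj_on (lam a o') (carrier (LambdaL o'))"
proof -
  define c where "c = [edge a o']"
  have c: "is_path c" "pstart c = o'" "pend c = a" using edge_path[OF oa] by (auto simp: c_def)
  have F: "\<And>p. p \<in> loops o' \<Longrightarrow> lam a o' (wclass p) = wclass (cnj c p)" using lam_w[OF oa] c_def by blast
  have fQ: "\<And>p. p \<in> loops o' \<Longrightarrow> cnj c p \<in> loops a" using cnj_loop[OF c(1)] c by simp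
  have fm: "\<And>p q. p \<in> loops o' \<Longrightarrow> q \<in> loops o' \<Longrightarrow> weq (cnj c (p @ q)) (cnj c p @ cnj c q)"
    using cnj_mult[OF c(1)] c by simp
  have fi: "\<And>p q. p \<in> loops o' \<Longrightarrow> q \<in> loops o' \<Longrightarrow> weq (cnj c p) (cnj c q) \<Longrightarrow> weq p q"
    using cnj_inj[OF c(1)] c by simp
  have fs: "\<And>q. q \<in> loops a \<Longrightarrow> \<exists>p\<in>loops o'. weq (cnj c p) q"
    using cnj_surj[OF c(1)] c by blast
  have h1: "lam a o' \<in> hom (Lambda o') (Lambda a)"
    by (rule generic_hom[where F="lam a o'" and f="cnj c", OF carrier_Lambda[of o'] carrier_Lambda[of a] Lambda_mult_w[where o'=o'] Lambda_mult_w[where o'=a] loops_app[where o'=o'] F fQ fm])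
  have i1: "inj_on (lam a o') (carrier (Lambda o'))"
    by (rule generic_inj[where F="lam a o'" and f="cnj c", OF carrier_Lambda[of o'] F fi])
  have s1: "lam a o' ` carrier (Lambda o') = carrier (Lambda a)"
    by (rule generic_surj[where F="lam a o'" and f="cnj c", OF carrier_Lambda[of o'] carrier_Lambda[of a] F fQ fs])
  have FL: "\<And>p. p \<in> lloops o' \<Longrightarrow> lam a o' (wclass p) = wclass (cnj c p)" using F lloops_sub by blast
  have fQL: "\<And>p. p \<in> lloops o' \<Longrightarrow> cnj c p \<in> lloops a"
  proof -
    fix p assume p: "p \<in> lloops o'"
    have "\<forall>b\<in>set (cnj c p). supp b \<le> a"
      using p oa by (auto simp: set_cnj c_def lloops_def)
    then show "cnj c p \<in> lloops a" using fQ lloops_sub[OF p] by (simp add: lloops_def)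
  qed
  have fmL: "\<And>p q. p \<in> lloops o' \<Longrightarrow> q \<in> lloops o' \<Longrightarrow> weq (cnj c (p @ q)) (cnj c p @ cnj c q)"
  proof -
    fix p q assume a1: "p \<in> lloops o'" and a2: "q \<in> lloops o'"
    show "weq (cnj c (p @ q)) (cnj c p @ cnj c q)" by (rule fm[OF lloops_sub[OF a1] lloops_sub[OF a2]])
  qed
  have fiL: "\<And>p q. p \<in> lloops o' \<Longrightarrow> q \<in> lloops o' \<Longrightarrow> weq (cnj c p) (cnj c q) \<Longrightarrow> weq p q"
  proof -
    fix p q assume a1: "p \<in> lloops o'" and a2: "q \<in> lloops o'" and w: "weq (cnj c p) (cnj c q)"
    show "weq p q" by (rule fi[OF lloops_sub[OF a1] lloops_sub[OF a2] w])
  qed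
  have h2: "lam a o' \<in> hom (LambdaL o') (LambdaL a)"
    by (rule generic_hom[where F="lam a o'" and f="cnj c", OF carrier_LambdaL[of o'] carrier_LambdaL[of a] LambdaL_mult_w[where o'=o'] LambdaL_mult_w[where o'=a] lloops_app[where o'=o'] FL fQL fmL])
  have i2: "inj_on (lam a o') (carrier (LambdaL o'))"
    by (rule generic_inj[where F="lam a o'" and f="cnj c", OF carrier_LambdaL[of o'] FL fiL])
  show ?thesis using h1 i1 s1 h2 i2 by (simp add: iso_def bij_betw_def)
qed

lemma lam_comp:
  assumes oa: "o' \<le> a" and ae: "a \<le> e" and x: "x \<in> carrier (Lambda o')"
  shows "lam e o' x = lam e a (lam a o' x)"
proof -
  obtain p where p: "p \<in> loops o'" "x = wclass p" using x by (auto simp: carrier_Lambda)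
  have oe: "o' \<le> e" using oa ae by simp
  define c1 where "c1 = [edge a o']"
  define c2 where "c2 = [edge e a]"
  define c3 where "c3 = [edge e o']"
  have c1: "is_path c1" "pstart c1 = o'" "pend c1 = a" using edge_path[OF oa] by (auto simp: c1_def)
  have c2: "is_path c2" "pstart c2 = a" "pend c2 = e" using edge_path[OF ae] by (auto simp: c2_def)
  have c21: "is_path (c2 @ c1)" "pstart (c2 @ c1) = o'" using path_app[OF c2(1) c1(1)] c1 c2 by auto
  have l1: "lam a o' x = wclass (cnj c1 p)" using lam_w[OF oa p(1)] p c1_def by simp
  have cl: "cnj c1 p \<in> loops a" using cnj_loop[OF c1(1)] c1 p by simp
  have l2: "lam e a (lam a o' x) = wclass (cnj (c2 @ c1) p)"
    using lam_w[OF ae cl] l1 c2_def by (simp add: cnj_def)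
  have l3: "lam e o' x = wclass (cnj c3 p)" using lam_w[OF oe p(1)] p c3_def by simp
  have mv: "\<exists>xs ys o'' a' e'. e' \<le> a' \<and> a' \<le> o'' \<and>
      c2 @ c1 = xs @ [edge o'' a', edge a' e'] @ ys \<and> c3 = xs @ [edge o'' e'] @ ys"
    by (rule exI[of _ "[]"], rule exI[of _ "[]"], rule exI[of _ e], rule exI[of _ a], rule exI[of _ o'])
      (simp add: oa ae c1_def c2_def c3_def)
  have "is_path c3" "pstart c3 = o'" "pend c3 = e" using edge_path[OF oe] by (auto simp: c3_def)
  then have "wstep (c2 @ c1) c3" unfolding wstep_def using c21 mv c2
    by (simp add: c2_def c3_def c1_def pend_def)
  then have wq: "weq (cnj (c2 @ c1) p) (cnj c3 p)" using cnj_cong[OF c21(1) wstep_weq] c21 p by simp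
  show ?thesis using l2 l3 wclass_eq[OF wq] by simp
qed

lemma sa_d[simp]: "d0 (simp_act f b) = f (d0 b)" "d1 (simp_act f b) = f (d1 b)" "supp (simp_act f b) = f (supp b)"
  by (simp_all add: simp_act_def d0_def d1_def supp_def)
lemma sa_iota[simp]: "simp_act f (iota a) = iota (f a)" by (simp add: simp_act_def iota_def d0_def d1_def supp_def)
lemma sa_edge[simp]: "simp_act f (edge o' a) = edge (f o') (f a)" by (simp add: simp_act_def edge_def d0_def d1_def supp_def)
lemma sa_opp[simp]: "simp_act f (opp b) = opp (simp_act f b)" by (simp add: simp_act_def opp_def d0_def d1_def supp_def)
lemma sa_simp1: "mono f \<Longrightarrow> is_simp1 b \<Longrightarrow> is_simp1 (simp_act f b)" by (simp add: is_simp1_def monoD)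

lemma sa_comp: "simp_act f (simp_act g b) = simp_act (\<lambda>x. f (g x)) b"
  by (simp add: simp_act_def d0_def d1_def supp_def)
lemma sa_id: "(\<And>x. f x = x) \<Longrightarrow> simp_act f b = b"
  by (simp add: simp_act_def d0_def d1_def supp_def)

lemma map_path: assumes "mono f" "is_path p"
  shows "is_path (map (simp_act f) p) \<and> pstart (map (simp_act f) p) = f (pstart p) \<and> pend (map (simp_act f) p) = f (pend p)"
proof -
  have ne: "p \<noteq> []" using assms path_ne by auto
  have "is_path (map (simp_act f) p)" using assms unfolding is_path_def by (auto simp: sa_simp1)
  then show ?thesis using ne by (simp add: pstart_def pend_def last_map hd_map)
qed

lemma map_opp_path: "map (simp_act f) (opp_path p) = opp_path (map (simp_act f) p)"
  by (simp add: opp_path_def rev_map comp_def)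

lemma wstep_map: assumes f: "mono f" and w: "wstep p q"
  shows "wstep (map (simp_act f) p) (map (simp_act f) q)"
proof -
  have pp: "is_path p" "is_path q" "pstart p = pstart q" "pend p = pend q" using wstep_props[OF w] by auto
  have P: "is_path (map (simp_act f) p)" "is_path (map (simp_act f) q)"
    "pstart (map (simp_act f) p) = pstart (map (simp_act f) q)" "pend (map (simp_act f) p) = pend (map (simp_act f) q)"
    using map_path[OF f pp(1)] map_path[OF f pp(2)] pp by auto
  let ?m = "map (simp_act f)"
  from w have moves:
    "(\<exists>xs ys a. p = xs @ ys \<and> q = xs @ [iota a] @ ys) \<or>
     (\<exists>xs ys o' a e. e \<le> a \<and> a \<le> o' \<and>
         p = xs @ [edge o' a, edge a e] @ ys \<and> q = xs @ [edge o' e] @ ys) \<or>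
     (\<exists>xs ys b. p = xs @ [opp b, b] @ ys \<and> q = xs @ [iota (d1 b)] @ ys)"
    by (simp add: wstep_def)
  from moves have D: "(\<exists>xs ys a. ?m p = xs @ ys \<and> ?m q = xs @ [iota a] @ ys) \<or>
     (\<exists>xs ys o' a e. e \<le> a \<and> a \<le> o' \<and>
         ?m p = xs @ [edge o' a, edge a e] @ ys \<and> ?m q = xs @ [edge o' e] @ ys) \<or>
     (\<exists>xs ys b. ?m p = xs @ [opp b, b] @ ys \<and> ?m q = xs @ [iota (d1 b)] @ ys)"
  proof (elim disjE exE conjE)
    fix xs ys a assume "p = xs @ ys" "q = xs @ [iota a] @ ys"
    then show ?thesis
      by (intro disjI1 exI[of _ "?m xs"] exI[of _ "?m ys"] exI[of _ "f a"]) simp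
  next
    fix xs ys o' a e assume "e \<le> a" "a \<le> o'" "p = xs @ [edge o' a, edge a e] @ ys" "q = xs @ [edge o' e] @ ys"
    then show ?thesis using f
      by (intro disjI2 disjI1 exI[of _ "?m xs"] exI[of _ "?m ys"] exI[of _ "f o'"] exI[of _ "f a"] exI[of _ "f e"])
        (simp add: monoD)
  next
    fix xs ys b assume "p = xs @ [opp b, b] @ ys" "q = xs @ [iota (d1 b)] @ ys"
    then show ?thesis
      by (intro disjI2 exI[of _ "?m xs"] exI[of _ "?m ys"] exI[of _ "simp_act f b"]) simp
  qed
  show ?thesis unfolding wstep_def by (intro conjI P(1) P(2) P(3) P(4) D)
qed

lemma weq_map: assumes f: "mono f" and w: "weq p q"
  shows "weq (map (simp_act f) p) (map (simp_act f) q)"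
  using w unfolding weq_def
proof (induction rule: rtranclp_induct)
  case base then show ?case by simp
next
  case (step y z)
  from step.hyps(2) have "symclp wstep (map (simp_act f) y) (map (simp_act f) z)"
    by (cases rule: symclpE) (simp_all add: symclp_def wstep_map[OF f])
  then show ?case using step.IH by (simp add: rtranclp.rtrancl_into_rtrancl)
qed

lemma gstar_w: assumes f: "mono f" shows "gstar f (wclass p) = wclass (map (simp_act f) p)"
proof (rule Set.set_eqI)
  fix r
  show "r \<in> gstar f (wclass p) \<longleftrightarrow> r \<in> wclass (map (simp_act f) p)"
  proof
    assume "r \<in> gstar f (wclass p)"
    then obtain p' where w1: "weq p p'" and w2: "weq (map (simp_act f) p') r"
      by (auto simp: gstar_def mem_wclass)
    have "weq (map (simp_act f) p) (map (simp_act f) p')" by (rule weq_map[OF f w1])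
    then show "r \<in> wclass (map (simp_act f) p)" using weq_trans[OF _ w2] by (simp add: mem_wclass)
  next
    assume "r \<in> wclass (map (simp_act f) p)"
    then show "r \<in> gstar f (wclass p)" by (auto simp: gstar_def mem_wclass)
  qed
qed

lemma map_loops: "mono f \<Longrightarrow> p \<in> loops o' \<Longrightarrow> map (simp_act f) p \<in> loops (f o')"
  using map_path by (auto simp: loops_iff)

lemma map_lloops: "mono f \<Longrightarrow> p \<in> lloops o' \<Longrightarrow> map (simp_act f) p \<in> lloops (f o')"
  using map_loops by (auto simp: lloops_def monoD)

lemma map_map_inv: "(\<And>x. h (f x) = x) \<Longrightarrow> map (simp_act h) (map (simp_act f) p) = p"
  by (induction p) (simp_all add: sa_comp sa_id)

lemma gstar_iso:
  assumes f: "mono f" and h: "mono h" and hf: "\<And>x. h (f x) = x" and fh: "\<And>x. f (h x) = x"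
  shows "gstar f \<in> iso (Lambda o') (Lambda (f o')) \<and> gstar f \<in> iso (LambdaL o') (LambdaL (f o'))"
proof -
  let ?m = "map (simp_act f)"
  have F: "\<And>p. gstar f (wclass p) = wclass (?m p)" using gstar_w[OF f] .
  have fm: "\<And>p q. weq (?m (p @ q)) (?m p @ ?m q)" by simp
  have fi: "\<And>p q. weq (?m p) (?m q) \<Longrightarrow> weq p q"
    using weq_map[OF h] map_map_inv[of h f] hf by metis
  have s1: "\<And>q. q \<in> loops (f o') \<Longrightarrow> \<exists>p\<in>loops o'. weq (?m p) q"
    using map_loops[OF h] map_map_inv[of f h] fh hf by (metis weq_refl)
  have s2: "\<And>q. q \<in> lloops (f o') \<Longrightarrow> \<exists>p\<in>lloops o'. weq (?m p) q"
    using map_lloops[OF h] map_map_inv[of f h] fh hf by (metis weq_refl)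
  have h1: "gstar f \<in> hom (Lambda o') (Lambda (f o'))"
    by (rule generic_hom[where F="gstar f" and f="map (simp_act f)", OF carrier_Lambda[of o'] carrier_Lambda[of "f o'"] Lambda_mult_w[where o'=o'] Lambda_mult_w[where o'="f o'"] loops_app[where o'=o'] F map_loops[OF f] fm])
  have i1: "inj_on (gstar f) (carrier (Lambda o'))"
    by (rule generic_inj[where F="gstar f" and f="map (simp_act f)", OF carrier_Lambda[of o'] F fi])
  have u1: "gstar f ` carrier (Lambda o') = carrier (Lambda (f o'))"
    by (rule generic_surj[where F="gstar f" and f="map (simp_act f)", OF carrier_Lambda[of o'] carrier_Lambda[of "f o'"] F map_loops[OF f] s1])
  have h2: "gstar f \<in> hom (LambdaL o') (LambdaL (f o'))"
    by (rule generic_hom[where F="gstar f" and f="map (simp_act f)", OF carrier_LambdaL[of o'] carrier_LambdaL[of "f o'"] LambdaL_mult_w[where o'=o'] LambdaL_mult_w[where o'="f o'"] lloops_app[where o'=o'] F map_lloops[OF f] fm])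
  have i2: "inj_on (gstar f) (carrier (LambdaL o'))"
    by (rule generic_inj[where F="gstar f" and f="map (simp_act f)", OF carrier_LambdaL[of o'] F fi])
  have u2: "gstar f ` carrier (LambdaL o') = carrier (LambdaL (f o'))"
    by (rule generic_surj[where F="gstar f" and f="map (simp_act f)", OF carrier_LambdaL[of o'] carrier_LambdaL[of "f o'"] F map_lloops[OF f] s2])
  show ?thesis using h1 i1 u1 h2 i2 u2 by (simp add: iso_def bij_betw_def)
qed

lemma gstar_lam:
  assumes f: "mono f" and ao: "a \<le> o'" and x: "x \<in> carrier (Lambda a)"
  shows "gstar f (lam o' a x) = lam (f o') (f a) (gstar f x)"
proof -
  obtain p where p: "p \<in> loops a" "x = wclass p" using x by (auto simp: carrier_Lambda)
  have fa: "f a \<le> f o'" using f ao by (simp add: monoD)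
  have "gstar f (lam o' a x) = wclass (map (simp_act f) (cnj [edge o' a] p))"
    using lam_w[OF ao p(1)] p gstar_w[OF f] by simp
  also have "\<dots> = wclass (cnj [edge (f o') (f a)] (map (simp_act f) p))"
    by (simp add: cnj_def map_opp_path)
  also have "\<dots> = lam (f o') (f a) (gstar f x)"
    using lam_w[OF fa map_loops[OF f p(1)]] p gstar_w[OF f] by simp
  finally show ?thesis .
qed

lemma sym_unfold:
  assumes S: "symmetry_group G \<phi>"
  shows "group G" "group_action G UNIV \<phi>" "\<forall>g\<in>carrier G. \<forall>x y. x \<le> y \<longleftrightarrow> \<phi> g x \<le> \<phi> g y"
  using S unfolding symmetry_group_def by blast+

lemma sym_facts:
  assumes S: "symmetry_group G \<phi>" and g: "g \<in> carrier G"
  shows "mono (\<phi> g) \<and> mono (\<phi> (inv\<^bsub>G\<^esub> g)) \<and> (\<forall>x. \<phi> (inv\<^bsub>G\<^esub> g) (\<phi> g x) = x) \<and> (\<forall>x. \<phi> g (\<phi> (inv\<^bsub>G\<^esub> g) x) = x)"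
proof -
  have G: "group G" and A: "group_action G UNIV \<phi>" and M: "\<forall>g\<in>carrier G. \<forall>x y. x \<le> y \<longleftrightarrow> \<phi> g x \<le> \<phi> g y"
    using sym_unfold[OF S] by blast+
  have ig: "inv\<^bsub>G\<^esub> g \<in> carrier G" using group.inv_closed[OF G g] .
  have one: "\<And>x. \<phi> \<one>\<^bsub>G\<^esub> x = x" using group_action.id_eq_one[OF A] by (metis UNIV_I restrict_apply')
  have "\<And>x. \<phi> (inv\<^bsub>G\<^esub> g) (\<phi> g x) = x"
    using group_action.composition_rule[OF A UNIV_I ig g] group.l_inv[OF G g] one by simp
  moreover have "\<And>x. \<phi> g (\<phi> (inv\<^bsub>G\<^esub> g) x) = x"
    using group_action.composition_rule[OF A UNIV_I g ig] group.r_inv[OF G g] one by simp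
  moreover have "mono (\<phi> g)" by (rule monoI) (use M g in blast)
  moreover have "mono (\<phi> (inv\<^bsub>G\<^esub> g))" by (rule monoI) (use M ig in blast)
  ultimately show ?thesis by blast
qed

lemma sym_comp:
  assumes S: "symmetry_group G \<phi>" and g: "g \<in> carrier G" and h: "h \<in> carrier G"
  shows "\<phi> (h \<otimes>\<^bsub>G\<^esub> g) = (\<lambda>x. \<phi> h (\<phi> g x))"
proof -
  have A: "group_action G UNIV \<phi>" using sym_unfold[OF S] by blast
  show ?thesis using group_action.composition_rule[OF A UNIV_I h g] by auto
qed

lemma gstar_comp:
  assumes S: "symmetry_group G \<phi>" and g: "g \<in> carrier G" and h: "h \<in> carrier G" and x: "x \<in> carrier (Lambda o')"
  shows "gstar (\<phi> h) (gstar (\<phi> g) x) = gstar (\<phi> (h \<otimes>\<^bsub>G\<^esub> g)) x"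
proof -
  have G: "group G" using sym_unfold[OF S] by blast
  have hg: "h \<otimes>\<^bsub>G\<^esub> g \<in> carrier G" using monoid.m_closed[OF group.is_monoid[OF G] h g] .
  have m: "mono (\<phi> g)" "mono (\<phi> h)" "mono (\<phi> (h \<otimes>\<^bsub>G\<^esub> g))" using sym_facts[OF S] g h hg by auto
  obtain p where p: "x = wclass p" using x by (auto simp: carrier_Lambda)
  have "gstar (\<phi> h) (gstar (\<phi> g) x) = wclass (map (simp_act (\<phi> h)) (map (simp_act (\<phi> g)) p))"
    using p gstar_w[OF m(1)] gstar_w[OF m(2)] by simp
  also have "\<dots> = wclass (map (simp_act (\<phi> (h \<otimes>\<^bsub>G\<^esub> g))) p)"
    using sym_comp[OF S g h] by (simp add: sa_comp comp_def)
  also have "\<dots> = gstar (\<phi> (h \<otimes>\<^bsub>G\<^esub> g)) x" using p gstar_w[OF m(3)] by simp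
  finally show ?thesis .
qed


theorem proposition3p4:
  assumes conn: "path_connected_poset TYPE('k::order)"
  shows
   "\<comment> \<open>(i) net bundle (Lambda, lam)\<close>
    (\<forall>o'::'k. group (Lambda o')) \<and>
    (\<forall>o' a::'k. o' \<le> a \<longrightarrow> lam a o' \<in> iso (Lambda o') (Lambda a)) \<and>
    (\<forall>o' a e::'k. o' \<le> a \<longrightarrow> a \<le> e \<longrightarrow>
        (\<forall>x\<in>carrier (Lambda o'). lam e o' x = lam e a (lam a o' x))) \<and>
    \<comment> \<open>net (LambdaL, lam)\<close>
    (\<forall>o'::'k. group (LambdaL o')) \<and>
    (\<forall>o' a::'k. o' \<le> a \<longrightarrow> lam a o' \<in> hom (LambdaL o') (LambdaL a) \<and>
        inj_on (lam a o') (carrier (LambdaL o'))) \<and>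
    (\<forall>o' a e::'k. o' \<le> a \<longrightarrow> a \<le> e \<longrightarrow>
        (\<forall>x\<in>carrier (LambdaL o'). lam e o' x = lam e a (lam a o' x))) \<and>
    \<comment> \<open>the inclusions form a monomorphism\<close>
    (\<forall>o'::'k. (\<lambda>x. x) \<in> hom (LambdaL o') (Lambda o') \<and>
        inj_on (\<lambda>x. x) (carrier (LambdaL o'))) \<and>
    (\<forall>o' a::'k. o' \<le> a \<longrightarrow>
        (\<forall>x\<in>carrier (LambdaL o'). lam a o' ((\<lambda>x. x) x) = (\<lambda>x. x) (lam a o' x))) \<and>
    \<comment> \<open>(ii) G-covariance\<close>
    (\<forall>(G::('g, 'b) monoid_scheme) (\<phi>::'g \<Rightarrow> 'k \<Rightarrow> 'k). symmetry_group G \<phi> \<longrightarrow>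
       (\<forall>g\<in>carrier G. \<forall>o'. gstar (\<phi> g) \<in> iso (Lambda o') (Lambda (\<phi> g o')) \<and>
                          gstar (\<phi> g) \<in> iso (LambdaL o') (LambdaL (\<phi> g o'))) \<and>
       (\<forall>g\<in>carrier G. \<forall>h\<in>carrier G. \<forall>o'.
          (\<forall>x\<in>carrier (Lambda o'). gstar (\<phi> h) (gstar (\<phi> g) x) = gstar (\<phi> (h \<otimes>\<^bsub>G\<^esub> g)) x) \<and>
          (\<forall>x\<in>carrier (LambdaL o'). gstar (\<phi> h) (gstar (\<phi> g) x) = gstar (\<phi> (h \<otimes>\<^bsub>G\<^esub> g)) x)) \<and>
       (\<forall>g\<in>carrier G. \<forall>o' a. a \<le> o' \<longrightarrow>
          (\<forall>x\<in>carrier (Lambda a). gstar (\<phi> g) (lam o' a x) = lam (\<phi> g o') (\<phi> g a) (gstar (\<phi> g) x)) \<and>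
          (\<forall>x\<in>carrier (LambdaL a). gstar (\<phi> g) (lam o' a x) = lam (\<phi> g o') (\<phi> g a) (gstar (\<phi> g) x))) \<and>
       (\<forall>g\<in>carrier G. \<forall>o'. \<forall>x\<in>carrier (LambdaL o').
          gstar (\<phi> g) ((\<lambda>x. x) x) = (\<lambda>x. x) (gstar (\<phi> g) x)))"
  proof -
  have sub: "\<And>o' x. x \<in> carrier (LambdaL o') \<Longrightarrow> x \<in> carrier (Lambda o')"
    by (simp add: LambdaL_def)
  have P1: "\<forall>o'::'k. group (Lambda o')" using group_Lambda by blast
  have P2: "\<forall>o' a::'k. o' \<le> a \<longrightarrow> lam a o' \<in> iso (Lambda o') (Lambda a)" using lam_props by blast
  have P3: "\<forall>o' a e::'k. o' \<le> a \<longrightarrow> a \<le> e \<longrightarrow>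
        (\<forall>x\<in>carrier (Lambda o'). lam e o' x = lam e a (lam a o' x))" using lam_comp by blast
  have P4: "\<forall>o'::'k. group (LambdaL o')" using group_LambdaL by blast
  have P5: "\<forall>o' a::'k. o' \<le> a \<longrightarrow> lam a o' \<in> hom (LambdaL o') (LambdaL a) \<and>
        inj_on (lam a o') (carrier (LambdaL o'))" using lam_props by blast
  have P6: "\<forall>o' a e::'k. o' \<le> a \<longrightarrow> a \<le> e \<longrightarrow>
        (\<forall>x\<in>carrier (LambdaL o'). lam e o' x = lam e a (lam a o' x))" using lam_comp sub by blast
  have P7: "\<forall>o'::'k. (\<lambda>x. x) \<in> hom (LambdaL o') (Lambda o') \<and>
        inj_on (\<lambda>x. x) (carrier (LambdaL o'))"
  proof
    fix o' :: 'k
    have "(\<lambda>x. x) \<in> hom (LambdaL o') (Lambda o')"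
      unfolding hom_def using sub by (auto simp: LambdaL_mult)
    moreover have "inj_on (\<lambda>x. x) (carrier (LambdaL o'))" by (simp add: inj_on_def)
    ultimately show "(\<lambda>x. x) \<in> hom (LambdaL o') (Lambda o') \<and> inj_on (\<lambda>x. x) (carrier (LambdaL o'))" by blast
  qed
  have P8: "\<forall>o' a::'k. o' \<le> a \<longrightarrow>
        (\<forall>x\<in>carrier (LambdaL o'). lam a o' ((\<lambda>x. x) x) = (\<lambda>x. x) (lam a o' x))" by simp
  have P9: "\<forall>(G::('g, 'b) monoid_scheme) (\<phi>::'g \<Rightarrow> 'k \<Rightarrow> 'k). symmetry_group G \<phi> \<longrightarrow>
       (\<forall>g\<in>carrier G. \<forall>o'. gstar (\<phi> g) \<in> iso (Lambda o') (Lambda (\<phi> g o')) \<and>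
                          gstar (\<phi> g) \<in> iso (LambdaL o') (LambdaL (\<phi> g o'))) \<and>
       (\<forall>g\<in>carrier G. \<forall>h\<in>carrier G. \<forall>o'.
          (\<forall>x\<in>carrier (Lambda o'). gstar (\<phi> h) (gstar (\<phi> g) x) = gstar (\<phi> (h \<otimes>\<^bsub>G\<^esub> g)) x) \<and>
          (\<forall>x\<in>carrier (LambdaL o'). gstar (\<phi> h) (gstar (\<phi> g) x) = gstar (\<phi> (h \<otimes>\<^bsub>G\<^esub> g)) x)) \<and>
       (\<forall>g\<in>carrier G. \<forall>o' a. a \<le> o' \<longrightarrow>
          (\<forall>x\<in>carrier (Lambda a). gstar (\<phi> g) (lam o' a x) = lam (\<phi> g o') (\<phi> g a) (gstar (\<phi> g) x)) \<and>
          (\<forall>x\<in>carrier (LambdaL a). gstar (\<phi> g) (lam o' a x) = lam (\<phi> g o') (\<phi> g a) (gstar (\<phi> g) x))) \<and>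
       (\<forall>g\<in>carrier G. \<forall>o'. \<forall>x\<in>carrier (LambdaL o').
          gstar (\<phi> g) ((\<lambda>x. x) x) = (\<lambda>x. x) (gstar (\<phi> g) x))"
  proof (intro allI impI)
    fix G :: "('g, 'b) monoid_scheme" and \<phi> :: "'g \<Rightarrow> 'k \<Rightarrow> 'k"
    assume S: "symmetry_group G \<phi>"
    have A: "\<forall>g\<in>carrier G. \<forall>o'. gstar (\<phi> g) \<in> iso (Lambda o') (Lambda (\<phi> g o')) \<and>
                          gstar (\<phi> g) \<in> iso (LambdaL o') (LambdaL (\<phi> g o'))"
    proof (intro ballI allI)
      fix g o' assume g: "g \<in> carrier G"
      have sf: "mono (\<phi> g)" "mono (\<phi> (inv\<^bsub>G\<^esub> g))" "\<And>x. \<phi> (inv\<^bsub>G\<^esub> g) (\<phi> g x) = x"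
        "\<And>x. \<phi> g (\<phi> (inv\<^bsub>G\<^esub> g) x) = x" using sym_facts[OF S g] by auto
      show "gstar (\<phi> g) \<in> iso (Lambda o') (Lambda (\<phi> g o')) \<and>
            gstar (\<phi> g) \<in> iso (LambdaL o') (LambdaL (\<phi> g o'))"
        by (rule gstar_iso[OF sf])
    qed
    have B: "\<forall>g\<in>carrier G. \<forall>h\<in>carrier G. \<forall>o'.
          (\<forall>x\<in>carrier (Lambda o'). gstar (\<phi> h) (gstar (\<phi> g) x) = gstar (\<phi> (h \<otimes>\<^bsub>G\<^esub> g)) x) \<and>
          (\<forall>x\<in>carrier (LambdaL o'). gstar (\<phi> h) (gstar (\<phi> g) x) = gstar (\<phi> (h \<otimes>\<^bsub>G\<^esub> g)) x)"
      using gstar_comp[OF S] sub by blast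
    have C: "\<forall>g\<in>carrier G. \<forall>o' a. a \<le> o' \<longrightarrow>
          (\<forall>x\<in>carrier (Lambda a). gstar (\<phi> g) (lam o' a x) = lam (\<phi> g o') (\<phi> g a) (gstar (\<phi> g) x)) \<and>
          (\<forall>x\<in>carrier (LambdaL a). gstar (\<phi> g) (lam o' a x) = lam (\<phi> g o') (\<phi> g a) (gstar (\<phi> g) x))"
    proof (intro ballI allI impI conjI)
      fix g and o' a :: 'k and x assume g: "g \<in> carrier G" and ao: "a \<le> o'" and x: "x \<in> carrier (Lambda a)"
      have m: "mono (\<phi> g)" using sym_facts[OF S g] by blast
      show "gstar (\<phi> g) (lam o' a x) = lam (\<phi> g o') (\<phi> g a) (gstar (\<phi> g) x)"
        by (rule gstar_lam[OF m ao x])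
    next
      fix g and o' a :: 'k and x assume g: "g \<in> carrier G" and ao: "a \<le> o'" and x: "x \<in> carrier (LambdaL a)"
      have m: "mono (\<phi> g)" using sym_facts[OF S g] by blast
      show "gstar (\<phi> g) (lam o' a x) = lam (\<phi> g o') (\<phi> g a) (gstar (\<phi> g) x)"
        by (rule gstar_lam[OF m ao sub[OF x]])
    qed
    show "(\<forall>g\<in>carrier G. \<forall>o'. gstar (\<phi> g) \<in> iso (Lambda o') (Lambda (\<phi> g o')) \<and>
                          gstar (\<phi> g) \<in> iso (LambdaL o') (LambdaL (\<phi> g o'))) \<and>
       (\<forall>g\<in>carrier G. \<forall>h\<in>carrier G. \<forall>o'.
          (\<forall>x\<in>carrier (Lambda o'). gstar (\<phi> h) (gstar (\<phi> g) x) = gstar (\<phi> (h \<otimes>\<^bsub>G\<^esub> g)) x) \<and>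
          (\<forall>x\<in>carrier (LambdaL o'). gstar (\<phi> h) (gstar (\<phi> g) x) = gstar (\<phi> (h \<otimes>\<^bsub>G\<^esub> g)) x)) \<and>
       (\<forall>g\<in>carrier G. \<forall>o' a. a \<le> o' \<longrightarrow>
          (\<forall>x\<in>carrier (Lambda a). gstar (\<phi> g) (lam o' a x) = lam (\<phi> g o') (\<phi> g a) (gstar (\<phi> g) x)) \<and>
          (\<forall>x\<in>carrier (LambdaL a). gstar (\<phi> g) (lam o' a x) = lam (\<phi> g o') (\<phi> g a) (gstar (\<phi> g) x))) \<and>
       (\<forall>g\<in>carrier G. \<forall>o'. \<forall>x\<in>carrier (LambdaL o').
          gstar (\<phi> g) ((\<lambda>x. x) x) = (\<lambda>x. x) (gstar (\<phi> g) x))"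
      using A B C by simp
  qed
  show ?thesis using P1 P2 P3 P4 P5 P6 P7 P8 P9 by blast
qed

end
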